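(* For CL-SG with exploration rate $\gamma>0$ in the sleeping semi-bandit problem, in each round $t>\max\{\sqrt m,4\}$ and given any $\Theta_t$, $$\frac{1}{\Pr_{\Theta_t}\Big(\sum_{a\in A_t^*}\bar r_{a,t}\ge\sum_{a\in A_t^*}r_a\Big)}\le 2\,\Phi\big(-\sqrt{4/\gamma}\big)^{-1},$$ where $\Phi$ is the standard Gaussian cdf and $\Pr_{\Theta_t}(\cdot):=\Pr(\cdot\mid\Theta_t)$.
   Context: Sleeping semi-bandit problem: $N\ge2$ base arms $[N]$, arm $a$ has reward distribution $p_a$ on $[0,1]$ with mean $r_a$; $\Theta\subseteq 2^{[N]}$ feasible super arms, $m:=\max_{A\in\Theta}|A|$. Each round $t=1,\dots,T$ a (possibly adversarial) $\Theta_t\subseteq\Theta$ is revealed, the agent plays $A_t\in\Theta_t$ and observes independent $X_{a,t}\sim p_a$ for $a\in A_t$. $A_t^*\in\arg\max_{A\in\Theta_t}\sum_{a\in A}r_a$. $n_{a,t}:=\sum_{\tau<t}\mathbf{1}[a\in A_\tau]$, $\hat r_{a,n_{a,t}}$ the empirical mean of observed rewards of $a$ before round $t$ ($0$ if none). CL-SG: each round draw a single $w_t\sim\mathcal{N}(0,1)$, set $\bar r_{a,t}=\hat r_{a,n_{a,t}}+w_t\sqrt{\frac{\gamma\ln t}{n_{a,t}+1}}$ for all $a$, and play $A_t\in\arg\max_{A\in\Theta_t}\sum_{a\in A}\bar r_{a,t}$. *)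

theory Defs
  imports "HOL-Probability.Probability"
begin

definition std_normal_measure :: "real measure" where
  "std_normal_measure = density lborel std_normal_density"

definition Phi :: "real \<Rightarrow> real" where
  "Phi x = measure std_normal_measure {..x}"

definition mean_rew :: "(nat \<Rightarrow> real measure) \<Rightarrow> nat \<Rightarrow> real" where
  "mean_rew p a = integral\<^sup>L (p a) (\<lambda>x. x)"

(* A history is the list of super arms played in rounds 1,...,k (in order). *)
definition cnt :: "nat set list \<Rightarrow> nat \<Rightarrow> nat" where
  "cnt h a = length (filter (\<lambda>A. a \<in> A) h)"

(* Reward-table model: X a k is the (k+1)-th observed reward of arm a.
   Empirical mean of the observations of arm a so far (0 if none). *)
definition emp_mean :: "(nat \<Rightarrow> nat \<Rightarrow> real) \<Rightarrow> nat set list \<Rightarrow> nat \<Rightarrow> real" where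
  "emp_mean X h a = (if cnt h a = 0 then 0 else (\<Sum>k<cnt h a. X a k) / real (cnt h a))"

definition rbar :: "real \<Rightarrow> (nat \<Rightarrow> real) \<Rightarrow> (nat \<Rightarrow> nat \<Rightarrow> real) \<Rightarrow> nat set list \<Rightarrow> nat \<Rightarrow> nat \<Rightarrow> real" where
  "rbar \<gamma> w X h t a = emp_mean X h a + w t * sqrt (\<gamma> * ln (real t) / (real (cnt h a) + 1))"

definition pick :: "(nat set \<Rightarrow> nat) \<Rightarrow> nat set set \<Rightarrow> (nat \<Rightarrow> real) \<Rightarrow> nat set" where
  "pick prio S v = arg_min_on prio {A \<in> S. \<forall>B\<in>S. (\<Sum>a\<in>B. v a) \<le> (\<Sum>a\<in>A. v a)}"

primrec hist :: "real \<Rightarrow> (nat set \<Rightarrow> nat) \<Rightarrow> (nat \<Rightarrow> nat set set) \<Rightarrow> (nat \<Rightarrow> real) \<Rightarrow> (nat \<Rightarrow> nat \<Rightarrow> real) \<Rightarrow> nat \<Rightarrow> nat set list" where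
  "hist \<gamma> prio Ths w X 0 = []"
| "hist \<gamma> prio Ths w X (Suc k) =
     (let h = hist \<gamma> prio Ths w X k
      in h @ [pick prio (Ths (Suc k)) (rbar \<gamma> w X h (Suc k))])"

(* underlying probability space: noise sequence (w_t) iid N(0,1), independent reward tables
   (X a k)_k iid p_a for each arm a < N *)
definition cl_space :: "nat \<Rightarrow> (nat \<Rightarrow> real measure) \<Rightarrow> ((nat \<Rightarrow> real) \<times> (nat \<Rightarrow> nat \<Rightarrow> real)) measure" where
  "cl_space N p = (PiM UNIV (\<lambda>_::nat. std_normal_measure)) \<Otimes>\<^sub>M
                  (PiM {..<N} (\<lambda>a. PiM UNIV (\<lambda>_::nat. p a)))"

definition rbar_round :: "real \<Rightarrow> (nat set \<Rightarrow> nat) \<Rightarrow> (nat \<Rightarrow> nat set set) \<Rightarrow> nat \<Rightarrow> (nat \<Rightarrow> real) \<times> (nat \<Rightarrow> nat \<Rightarrow> real) \<Rightarrow> nat \<Rightarrow> real" where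
  "rbar_round \<gamma> prio Ths t \<omega> a =
     rbar \<gamma> (fst \<omega>) (snd \<omega>) (hist \<gamma> prio Ths (fst \<omega>) (snd \<omega>) (t - 1)) t a"

end

theory Submission
  imports Defs
begin



lemma indep_components:
  fixes Q :: "real measure" and I :: "nat set"
  assumes Q: "prob_space Q" and sQ: "sets Q = sets borel" and I: "finite I" "I \<noteq> {}"
  shows "prob_space.indep_vars (PiM UNIV (\<lambda>_. Q)) (\<lambda>_. borel) (\<lambda>k x. x k) I"
proof -
  interpret P: product_prob_space "\<lambda>_::nat. Q" UNIV
    by (simp add: Q product_prob_space.intro product_prob_space_axioms.intro product_sigma_finite.intro prob_space_imp_sigma_finite)
  have rv: "\<And>i::nat. (\<lambda>x. x i) \<in> measurable (PiM UNIV (\<lambda>_. Q)) borel"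
  proof -
    fix i :: nat
    have 1: "(\<lambda>x. x i) \<in> measurable (PiM UNIV (\<lambda>_. Q)) Q"
      by (rule measurable_component_singleton) simp
    have eq: "measurable (PiM UNIV (\<lambda>_. Q)) Q = measurable (PiM UNIV (\<lambda>_. Q)) borel"
      by (rule measurable_cong_sets[OF refl sQ])
    show "(\<lambda>x. x i) \<in> measurable (PiM UNIV (\<lambda>_. Q)) borel" using 1 unfolding eq .
  qed
  have R: "PiM I (\<lambda>i. distr (PiM UNIV (\<lambda>_. Q)) borel (\<lambda>x. x i)) = PiM I (\<lambda>_. Q)"
  proof (rule PiM_cong)
    fix i assume "i \<in> I"
    have "distr (PiM UNIV (\<lambda>_. Q)) borel (\<lambda>x. x i) = distr (PiM UNIV (\<lambda>_. Q)) Q (\<lambda>x. x i)"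
      by (rule distr_cong) (auto simp: sQ)
    also have "\<dots> = Q" by (rule P.PiM_component) simp
    finally show "distr (PiM UNIV (\<lambda>_. Q)) borel (\<lambda>x. x i) = Q" .
  qed simp
  have L: "distr (PiM UNIV (\<lambda>_. Q)) (PiM I (\<lambda>_. borel)) (\<lambda>x. \<lambda>i\<in>I. x i) = PiM I (\<lambda>_. Q)"
  proof -
    have "distr (PiM UNIV (\<lambda>_. Q)) (PiM I (\<lambda>_. borel)) (\<lambda>x. \<lambda>i\<in>I. x i) = distr (PiM UNIV (\<lambda>_. Q)) (PiM I (\<lambda>_. Q)) (\<lambda>x. restrict x I)"
      by (rule distr_cong) (auto intro!: sets_PiM_cong simp: sQ)
    also have "\<dots> = PiM I (\<lambda>_. Q)" by (rule P.distr_PiM_restrict_finite) (auto simp: I)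
    finally show ?thesis .
  qed
  show ?thesis
    using P.indep_vars_iff_distr_eq_PiM[OF I(2) rv] L R by simp
qed



lemma std_prob: "prob_space std_normal_measure"
  unfolding std_normal_measure_def by (rule prob_space_normal_density) simp

lemma std_space[simp]: "space std_normal_measure = UNIV"
  unfolding std_normal_measure_def by simp

lemma std_sets[simp]: "sets std_normal_measure = sets borel"
  unfolding std_normal_measure_def by simp

lemma std_sym: "measure std_normal_measure {x. c \<le> x} = Phi (- c)"
proof -
  interpret prob_space std_normal_measure by (rule std_prob)
  have d: "distributed std_normal_measure lborel (\<lambda>x. x) std_normal_density"
    unfolding distributed_def std_normal_measure_def
    by (auto simp: distr_id2 intro!: density_cong)
  have "distributed std_normal_measure lborel (\<lambda>x. 0 + (-1) * x) (normal_density (0 + (-1) * 0) (\<bar>-1\<bar> * 1))"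
    by (rule normal_density_affine[OF d]) auto
  hence "distr std_normal_measure lborel (\<lambda>x. - x) = std_normal_measure"
    unfolding distributed_def std_normal_measure_def by simp
  hence "Phi (-c) = measure (distr std_normal_measure lborel (\<lambda>x. - x)) {..-c}"
    unfolding Phi_def by simp
  also have "\<dots> = measure std_normal_measure ((\<lambda>x. - x) -` {..-c} \<inter> space std_normal_measure)"
  proof (rule measure_distr)
    show "(\<lambda>x. - x) \<in> measurable std_normal_measure lborel"
      unfolding measurable_cong_sets[OF std_sets sets_lborel] by measurable
  qed simp
  also have "(\<lambda>x. - x) -` {..-c} \<inter> space std_normal_measure = {x. c \<le> x}" by auto
  finally show ?thesis by simp
qed

lemma Phi_pos: "Phi x > 0"
proof -
  interpret prob_space std_normal_measure by (rule std_prob)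
  have nz: "\<And>y. std_normal_density y \<noteq> 0" using normal_density_pos[of 1 0] by (metis less_irrefl zero_less_one)
  have "emeasure std_normal_measure {..x} \<noteq> 0"
  proof
    assume "emeasure std_normal_measure {..x} = 0"
    hence "(\<integral>\<^sup>+ y\<in>{..x}. ennreal (std_normal_density y) \<partial>lborel) = 0"
      unfolding std_normal_measure_def by (simp add: emeasure_density)
    hence "AE y in lborel. ennreal (std_normal_density y) * indicator {..x} y = 0"
      by (subst (asm) nn_integral_0_iff_AE) auto
    hence "AE y in lborel. y \<notin> {..x}"
      by eventually_elim (use nz in \<open>auto simp: indicator_def\<close>)
    hence "emeasure lborel {..x} = 0"
      by (subst (asm) AE_iff_measurable[of "{..x}"]) auto
    moreover have "emeasure lborel {x - 1..x} \<le> emeasure lborel {..x}"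
      by (rule emeasure_mono) auto
    ultimately show False by simp
  qed
  thus ?thesis unfolding Phi_def
    by (simp add: emeasure_eq_measure zero_less_measure_iff)
qed

lemma Phi_le1: "Phi x \<le> 1"
proof -
  interpret prob_space std_normal_measure by (rule std_prob)
  show ?thesis unfolding Phi_def by simp
qed


lemma hoeff_arm:
  fixes Q :: "real measure" and n :: nat and \<delta> :: real
  assumes Q: "prob_space Q" and sQ: "sets Q = sets borel"
    and ae: "AE x in Q. 0 \<le> x \<and> x \<le> 1" and n: "n \<ge> 1" and d: "\<delta> \<ge> 0"
  shows "measure (PiM UNIV (\<lambda>_. Q)) {x \<in> space (PiM UNIV (\<lambda>_. Q)). (\<Sum>k<n. x k) \<le> real n * integral\<^sup>L Q (\<lambda>x. x) - \<delta>}
         \<le> exp (- 2 * \<delta>\<^sup>2 / real n)"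
proof -
  interpret P: product_prob_space "\<lambda>_::nat. Q" UNIV
    by (simp add: Q product_prob_space.intro product_prob_space_axioms.intro product_sigma_finite.intro prob_space_imp_sigma_finite)
  have comp: "\<And>i::nat. distr (PiM UNIV (\<lambda>_. Q)) Q (\<lambda>x. x i) = Q"
    by (rule P.PiM_component) simp
  have mc: "\<And>i::nat. (\<lambda>x. x i) \<in> measurable (PiM UNIV (\<lambda>_. Q)) Q" by simp
  have ex: "\<And>i::nat. P.expectation (\<lambda>x. x i) = integral\<^sup>L Q (\<lambda>x. x)"
  proof -
    fix i :: nat
    have "integral\<^sup>L Q (\<lambda>x. x) = integral\<^sup>L (distr (PiM UNIV (\<lambda>_. Q)) Q (\<lambda>x. x i)) (\<lambda>x. x)"
      by (simp only: comp)
    also have "\<dots> = P.expectation (\<lambda>x. x i)"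
      by (rule integral_distr[OF mc]) (simp add: measurable_cong_sets[OF sQ refl])
    finally show "P.expectation (\<lambda>x. x i) = integral\<^sup>L Q (\<lambda>x. x)" by simp
  qed
  have aei: "\<And>i::nat. AE x in PiM UNIV (\<lambda>_. Q). x i \<in> {0..1}"
    by (rule P.AE_component) (use ae in auto)
  have ne: "{..<n} \<noteq> {}" using n lessThan_empty_iff by (metis not_one_le_zero)
  interpret H: Hoeffding_ineq "PiM UNIV (\<lambda>_. Q)" "{..<n}" "\<lambda>k x. x k" "\<lambda>_. 0" "\<lambda>_. 1"
     "\<Sum>i<n. P.expectation (\<lambda>x. x i)"
    by unfold_locales (use indep_components[OF Q sQ finite_lessThan ne] aei in auto)
  have "P.prob {x\<in>space (PiM UNIV (\<lambda>_. Q)). (\<Sum>i<n. x i) \<le> (\<Sum>i<n. P.expectation (\<lambda>x. x i)) - \<delta>}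
        \<le> exp (-2 * \<delta>\<^sup>2 / (\<Sum>i<n. (1 - 0)\<^sup>2))"
    by (rule H.Hoeffding_ineq_le) (use d n in auto)
  thus ?thesis by (simp add: ex)
qed



lemma meas_X:
  assumes sp: "\<And>a. a < N \<Longrightarrow> sets (p a) = sets borel"
  shows "(\<lambda>\<omega>. snd \<omega> a k) \<in> borel_measurable (cl_space N p)"
proof (cases "a < N")
  case True
  have "(\<lambda>\<omega>. snd \<omega> a k) \<in> measurable (cl_space N p) (p a)"
  proof -
    have 1: "(\<lambda>X. X a) \<in> measurable (PiM {..<N} (\<lambda>a. PiM UNIV (\<lambda>_. p a))) (PiM UNIV (\<lambda>_. p a))"
      by (rule measurable_component_singleton) (simp add: True)
    have 2: "(\<lambda>y. y k) \<in> measurable (PiM UNIV (\<lambda>_. p a)) (p a)"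
      by (rule measurable_component_singleton) simp
    show ?thesis unfolding cl_space_def
      using measurable_compose[OF measurable_snd[of "PiM UNIV (\<lambda>_. std_normal_measure)"] measurable_compose[OF 1 2]] by simp
  qed
  thus ?thesis using measurable_cong_sets[OF refl sp[OF True]] by blast
next
  case False
  have eq: "\<And>\<omega>. \<omega> \<in> space (cl_space N p) \<Longrightarrow> snd \<omega> a k = (undefined::nat\<Rightarrow>real) k"
    using False by (auto simp: cl_space_def space_pair_measure space_PiM PiE_def extensional_def)
  have "(\<lambda>\<omega>. snd \<omega> a k) \<in> borel_measurable (cl_space N p) \<longleftrightarrow> (\<lambda>\<omega>. (undefined::nat\<Rightarrow>real) k) \<in> borel_measurable (cl_space N p)"
    by (rule measurable_cong[where M="cl_space N p" and M'=borel and f="\<lambda>\<omega>. snd \<omega> a k" and g="\<lambda>\<omega>. (undefined::nat\<Rightarrow>real) k"]) (rule eq)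
  then show ?thesis by simp
qed

lemma meas_W:
  shows "(\<lambda>\<omega>. fst \<omega> k) \<in> borel_measurable (cl_space N p)"
proof -
  have "(\<lambda>\<omega>. fst \<omega> k) \<in> measurable (cl_space N p) std_normal_measure"
    unfolding cl_space_def by measurable
  thus ?thesis using measurable_cong_sets[OF refl, of std_normal_measure borel]
    by (simp add: std_normal_measure_def)
qed

lemma meas_emp:
  assumes sp: "\<And>a. a < N \<Longrightarrow> sets (p a) = sets borel"
  shows "(\<lambda>\<omega>. emp_mean (snd \<omega>) h a) \<in> borel_measurable (cl_space N p)"
proof (cases "cnt h a = 0")
  case True
  then show ?thesis unfolding emp_mean_def by simp
next
  case False
  have "(\<lambda>\<omega>. \<Sum>k<cnt h a. snd \<omega> a k) \<in> borel_measurable (cl_space N p)"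
    by (rule borel_measurable_sum) (rule meas_X[OF sp])
  then show ?thesis using False unfolding emp_mean_def
    by (simp add: borel_measurable_divide)
qed

lemma meas_rbar:
  assumes sp: "\<And>a. a < N \<Longrightarrow> sets (p a) = sets borel"
  shows "(\<lambda>\<omega>. rbar \<gamma> (fst \<omega>) (snd \<omega>) h t a) \<in> borel_measurable (cl_space N p)"
  unfolding rbar_def
  by (intro borel_measurable_add borel_measurable_times meas_emp[OF sp] meas_W measurable_const) auto

lemma meas_pick:
  fixes M :: "'m measure"
  assumes S: "finite S" and v: "\<And>a. (\<lambda>\<omega>. v \<omega> a) \<in> borel_measurable M" and SZ: "Pow S \<subseteq> Y"
  shows "(\<lambda>\<omega>. pick prio S (v \<omega>)) \<in> measurable M (count_space ((\<lambda>T. arg_min_on prio T) ` Y))"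
proof -
  define T where "T \<omega> = {A \<in> S. \<forall>B\<in>S. (\<Sum>a\<in>B. v \<omega> a) \<le> (\<Sum>a\<in>A. v \<omega> a)}" for \<omega>
  have cS: "countable (Pow S)" using S by (simp add: countable_finite)
  have "T \<in> measurable M (count_space (Pow S))"
  proof (subst measurable_count_space_eq_countable[OF cS], intro conjI ballI)
    show "T \<in> space M \<rightarrow> Pow S" by (auto simp: T_def)
    fix U assume "U \<in> Pow S"
    have "T -` {U} \<inter> space M = {\<omega> \<in> space M. \<forall>A\<in>S. (A \<in> U \<longleftrightarrow> (\<forall>B\<in>S. (\<Sum>a\<in>B. v \<omega> a) \<le> (\<Sum>a\<in>A. v \<omega> a)))}"
    proof -
      have key: "\<And>\<omega>. T \<omega> = U \<longleftrightarrow> (\<forall>A\<in>S. (A \<in> U \<longleftrightarrow> (\<forall>B\<in>S. (\<Sum>a\<in>B. v \<omega> a) \<le> (\<Sum>a\<in>A. v \<omega> a))))"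
        using \<open>U \<in> Pow S\<close> unfolding T_def by blast
      show ?thesis using key by blast
    qed
    also have "\<dots> \<in> sets M"
      using S v by measurable
    finally show "T -` {U} \<inter> space M \<in> sets M" .
  qed
  moreover have "(\<lambda>T. arg_min_on prio T) \<in> measurable (count_space (Pow S)) (count_space ((\<lambda>T. arg_min_on prio T) ` Y))"
    using SZ by auto
  ultimately have "(\<lambda>\<omega>. arg_min_on prio (T \<omega>)) \<in> measurable M (count_space ((\<lambda>T. arg_min_on prio T) ` Y))"
    by (rule measurable_compose)
  thus ?thesis by (simp add: pick_def T_def)
qed


lemma meas_hist:
  assumes sp: "\<And>a. a < N \<Longrightarrow> sets (p a) = sets borel"
    and fin: "finite \<Theta>" and sub: "\<And>\<tau>. Ths \<tau> \<subseteq> \<Theta>"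
  shows "(\<lambda>\<omega>. hist \<gamma> prio Ths (fst \<omega>) (snd \<omega>) k) \<in> measurable (cl_space N p)
     (count_space {h. set h \<subseteq> (\<lambda>T. arg_min_on prio T) ` Pow \<Theta> \<and> length h = k})"
proof (induction k)
  case 0
  then show ?case by simp
next
  case (Suc k)
  let ?Z = "(\<lambda>T. arg_min_on prio T) ` Pow \<Theta>"
  define F where "F h \<omega> = h @ [pick prio (Ths (Suc k)) (rbar \<gamma> (fst \<omega>) (snd \<omega>) h (Suc k))]" for h \<omega>
  have cnt: "countable {h. set h \<subseteq> ?Z \<and> length h = k}"
    by (rule countable_finite, rule finite_lists_length_eq) (use fin in auto)
  have "(\<lambda>\<omega>. F (hist \<gamma> prio Ths (fst \<omega>) (snd \<omega>) k) \<omega>) \<in> measurable (cl_space N p)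
     (count_space {h. set h \<subseteq> ?Z \<and> length h = Suc k})"
  proof (rule measurable_compose_countable'[OF _ Suc.IH cnt])
    fix h assume h: "h \<in> {h. set h \<subseteq> ?Z \<and> length h = k}"
    have fS: "finite (Ths (Suc k))" using fin sub finite_subset by blast
    have "(\<lambda>\<omega>. pick prio (Ths (Suc k)) (rbar \<gamma> (fst \<omega>) (snd \<omega>) h (Suc k))) \<in> measurable (cl_space N p) (count_space ?Z)"
      by (rule meas_pick[OF fS meas_rbar[OF sp]]) (use sub in auto)
    moreover have "(\<lambda>A. h @ [A]) \<in> measurable (count_space ?Z) (count_space {h. set h \<subseteq> ?Z \<and> length h = Suc k})"
      using h by auto
    ultimately show "F h \<in> measurable (cl_space N p) (count_space {h. set h \<subseteq> ?Z \<and> length h = Suc k})"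
      unfolding F_def by (rule measurable_compose)
  qed
  thus ?case by (simp add: F_def Let_def)
qed

lemma meas_event:
  assumes sp: "\<And>a. a < N \<Longrightarrow> sets (p a) = sets borel"
    and fin: "finite \<Theta>" and sub: "\<And>\<tau>. Ths \<tau> \<subseteq> \<Theta>"
  shows "(\<lambda>\<omega>. \<Sum>a\<in>Astar. rbar_round \<gamma> prio Ths t \<omega> a) \<in> borel_measurable (cl_space N p)"
proof -
  let ?Z = "(\<lambda>T. arg_min_on prio T) ` Pow \<Theta>"
  have cnt: "countable {h. set h \<subseteq> ?Z \<and> length h = t - 1}"
    by (rule countable_finite, rule finite_lists_length_eq) (use fin in auto)
  have "(\<lambda>\<omega>. (\<lambda>h \<omega>. \<Sum>a\<in>Astar. rbar \<gamma> (fst \<omega>) (snd \<omega>) h t a) (hist \<gamma> prio Ths (fst \<omega>) (snd \<omega>) (t - 1)) \<omega>)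
      \<in> borel_measurable (cl_space N p)"
    by (rule measurable_compose_countable'[OF _ meas_hist[OF sp fin sub] cnt])
       (intro borel_measurable_sum meas_rbar[OF sp])
  thus ?thesis unfolding rbar_round_def by simp
qed


lemma sets_le_real: "f \<in> borel_measurable M \<Longrightarrow> {x\<in>space M. f x \<le> (c::real)} \<in> sets M"
  using measurable_sets[of f M borel "{..c}"] by (simp add: vimage_def Int_def conj_commute)

lemma sets_ge_real: "f \<in> borel_measurable M \<Longrightarrow> {x\<in>space M. (c::real) \<le> f x} \<in> sets M"
  using measurable_sets[of f M borel "{c..}"] by (simp add: vimage_def Int_def conj_commute)

lemma length_hist[simp]: "length (hist \<gamma> prio Ths w X k) = k"
  by (induction k) (simp_all add: Let_def)

lemma cnt_le: "cnt h a \<le> length h"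
  unfolding cnt_def by simp

lemma mean_le1:
  fixes Q :: "real measure"
  assumes "prob_space Q" "sets Q = sets borel" "AE x in Q. 0 \<le> x \<and> x \<le> 1"
  shows "integral\<^sup>L Q (\<lambda>x. x) \<le> 1"
proof -
  interpret prob_space Q by fact
  have m: "(\<lambda>x. x) \<in> borel_measurable Q" by (rule measurable_ident_sets[OF assms(2)])
  have i: "integrable Q (\<lambda>x. x)"
  proof -
    have "AE x in Q. norm x \<le> (1::real)" using assms(3) by eventually_elim (metis abs_of_nonneg real_norm_def)
    thus ?thesis by (rule integrable_const_bound[OF _ m])
  qed
  have "integral\<^sup>L Q (\<lambda>x. x) \<le> integral\<^sup>L Q (\<lambda>x. 1)"
    by (rule integral_mono_AE[OF i]) (use assms(3) in auto)
  thus ?thesis by (simp add: prob_space.prob_space[OF assms(1)])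
qed

theorem lemma11:
  fixes N :: nat and p :: "nat \<Rightarrow> real measure" and \<Theta> :: "nat set set"
    and Ths :: "nat \<Rightarrow> nat set set" and prio :: "nat set \<Rightarrow> nat"
    and \<gamma> :: real and t :: nat and Astar :: "nat set"
  assumes "N \<ge> 2"
    and "\<And>a. a < N \<Longrightarrow> prob_space (p a)"
    and "\<And>a. a < N \<Longrightarrow> sets (p a) = sets borel"
    and "\<And>a. a < N \<Longrightarrow> (AE x in p a. 0 \<le> x \<and> x \<le> 1)"
    and "\<And>A. A \<in> \<Theta> \<Longrightarrow> A \<subseteq> {..<N}"
    and "\<And>\<tau>. Ths \<tau> \<subseteq> \<Theta> \<and> Ths \<tau> \<noteq> {}"
    and "inj_on prio \<Theta>"
    and "\<gamma> > 0"
    and "real t > max (sqrt (real (Max (card ` \<Theta>)))) 4"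
    and "Astar \<in> Ths t"
    and "\<And>B. B \<in> Ths t \<Longrightarrow> (\<Sum>a\<in>B. mean_rew p a) \<le> (\<Sum>a\<in>Astar. mean_rew p a)"
  shows "let P = measure (cl_space N p)
            {\<omega> \<in> space (cl_space N p).
               (\<Sum>a\<in>Astar. rbar_round \<gamma> prio Ths t \<omega> a) \<ge> (\<Sum>a\<in>Astar. mean_rew p a)}
         in P > 0 \<and> 1 / P \<le> 2 / Phi (- sqrt (4 / \<gamma>))"
proof -
  note pp = assms(2) and sp = assms(3) and ae = assms(4)
  have finT: "finite \<Theta>"
    by (rule finite_subset[of _ "Pow {..<N}"]) (use assms(5) in auto)
  have subT: "\<And>\<tau>. Ths \<tau> \<subseteq> \<Theta>" using assms(6) by blast
  have AT: "Astar \<in> \<Theta>" using assms(10) subT by blast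
  have AN: "\<And>a. a \<in> Astar \<Longrightarrow> a < N" using assms(5)[OF AT] by blast
  have finA: "finite Astar" using AT assms(5) finite_subset by blast
  define m where "m = Max (card ` \<Theta>)"
  have cardA: "card Astar \<le> m" unfolding m_def using finT AT by (intro Max_ge) auto
  have t4: "real t > 4" and tm: "sqrt (real m) < real t" using assms(9) by (auto simp: m_def)
  have mt: "real m < real t ^ 2"
  proof -
    have "real m = (sqrt (real m))\<^sup>2" by simp
    also have "\<dots> < real t ^ 2" by (rule power_strict_mono[OF tm]) auto
    finally show ?thesis .
  qed
  define L where "L = ln (real t)"
  have L1: "L \<ge> 1/4"
  proof -
    have "exp (1/4::real) \<le> exp 1" by simp
    also have "\<dots> \<le> 3" by (rule exp_le)
    finally have "exp (1/4::real) \<le> real t" using t4 by simp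
    thus ?thesis unfolding L_def using ln_ge_iff[of "real t" "1/4"] t4 by simp
  qed
  define c where "c = sqrt (4 / \<gamma>)"
  define r where "r a = mean_rew p a" for a
  define eps where "eps n = sqrt (4 * L / (real n + 1))" for n :: nat
  define W where "W = PiM (UNIV::nat set) (\<lambda>_. std_normal_measure)"
  define R where "R = PiM {..<N} (\<lambda>a. PiM (UNIV::nat set) (\<lambda>_. p a))"
  have MWR: "cl_space N p = W \<Otimes>\<^sub>M R" unfolding cl_space_def W_def R_def ..
  have pW: "prob_space W" unfolding W_def by (rule prob_space_PiM) (rule std_prob)
  have pR: "prob_space R" unfolding R_def
    by (rule prob_space_PiM, rule prob_space_PiM) (rule pp, simp)
  interpret W: prob_space W by (rule pW)
  interpret R: prob_space R by (rule pR)
  interpret WR: pair_prob_space W R by unfold_locales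
  define Wc where "Wc = {w \<in> space W. c \<le> w t}"
  define G where "G = {X \<in> space R. \<forall>a\<in>Astar. \<forall>n\<in>{1..<t}. r a - (\<Sum>k<n. X a k) / real n \<le> eps n}"
  define E where "E = {\<omega> \<in> space (cl_space N p).
               (\<Sum>a\<in>Astar. rbar_round \<gamma> prio Ths t \<omega> a) \<ge> (\<Sum>a\<in>Astar. mean_rew p a)}"
  have wt: "(\<lambda>w. w t) \<in> borel_measurable W"
  proof -
    have "(\<lambda>w. w t) \<in> measurable W std_normal_measure" unfolding W_def
      by (rule measurable_component_singleton) simp
    thus ?thesis by (simp add: measurable_cong_sets[OF refl std_sets])
  qed
  have WcS: "Wc \<in> sets W" unfolding Wc_def by (rule sets_ge_real[OF wt])
  have XR: "\<And>a k. a < N \<Longrightarrow> (\<lambda>X. X a k) \<in> borel_measurable R"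
  proof -
    fix a k :: nat assume a: "a < N"
    have 1: "(\<lambda>X. X a) \<in> measurable R (PiM UNIV (\<lambda>_. p a))"
      unfolding R_def by (rule measurable_component_singleton) (simp add: a)
    have 2: "(\<lambda>y. y k) \<in> measurable (PiM UNIV (\<lambda>_. p a)) (p a)"
      by (rule measurable_component_singleton) simp
    show "(\<lambda>X. X a k) \<in> borel_measurable R"
    proof -
      have eq: "measurable R (p a) = measurable R borel" by (rule measurable_cong_sets[OF refl sp[OF a]])
      show ?thesis using measurable_compose[OF 1 2] unfolding eq .
    qed
  qed
  have GS: "G \<in> sets R" unfolding G_def
  proof (intro sets.sets_Collect_finite_All finA finite_atLeastLessThan)
    fix a n assume a: "a \<in> Astar" and n: "n \<in> {1..<t}"
    have "(\<lambda>X. r a - (\<Sum>k<n. X a k) / real n) \<in> borel_measurable R"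
      by (intro borel_measurable_diff borel_measurable_divide borel_measurable_sum XR AN[OF a] measurable_const) auto
    thus "{X \<in> space R. r a - (\<Sum>k<n. X a k) / real n \<le> eps n} \<in> sets R"
      by (rule sets_le_real)
  qed
  have ES: "E \<in> sets (cl_space N p)" unfolding E_def
    by (rule sets_ge_real[OF meas_event[OF sp finT subT]])
  have incl: "Wc \<times> G \<subseteq> E"
  proof
    fix \<omega> assume om: "\<omega> \<in> Wc \<times> G"
    obtain w X where omd: "\<omega> = (w, X)" by (cases \<omega>)
    have wc: "c \<le> w t" and wW: "w \<in> space W" using om omd by (auto simp: Wc_def)
    have XG: "X \<in> G" using om omd by auto
    define h where "h = hist \<gamma> prio Ths w X (t - 1)"
    have "(\<Sum>a\<in>Astar. r a) \<le> (\<Sum>a\<in>Astar. rbar \<gamma> w X h t a)"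
    proof (rule sum_mono)
      fix a assume a: "a \<in> Astar"
      define n where "n = cnt h a"
      have nt: "n < t" using cnt_le[of h a] t4 unfolding n_def h_def by simp
      have ra1: "r a \<le> 1" unfolding r_def mean_rew_def using mean_le1 pp sp ae AN[OF a] by blast
      have s0: "0 \<le> sqrt (\<gamma> * L / (real n + 1))" using assms(8) L1 by simp
      have "c * sqrt (\<gamma> * L / (real n + 1)) = eps n"
        unfolding c_def eps_def using assms(8) by (simp add: real_sqrt_mult[symmetric] field_simps)
      hence "emp_mean X h a + eps n \<le> rbar \<gamma> w X h t a"
        unfolding rbar_def n_def L_def using mult_right_mono[OF wc s0] by (simp add: n_def L_def)
      moreover have "r a \<le> emp_mean X h a + eps n"
      proof (cases "n = 0")
        case True
        have "1 \<le> eps 0" unfolding eps_def using L1 by (simp add: real_le_rsqrt)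
        then show ?thesis using True ra1 unfolding emp_mean_def n_def by simp
      next
        case False
        hence "n \<in> {1..<t}" using nt by auto
        hence "r a - (\<Sum>k<n. X a k) / real n \<le> eps n" using XG a unfolding G_def by blast
        then show ?thesis using False unfolding emp_mean_def n_def by simp
      qed
      ultimately show "r a \<le> rbar \<gamma> w X h t a" by linarith
    qed
    moreover have "\<omega> \<in> space (cl_space N p)" using om omd WcS GS sets.sets_into_space
      unfolding MWR by (auto simp: space_pair_measure Wc_def G_def)
    ultimately show "\<omega> \<in> E" unfolding E_def rbar_round_def h_def r_def omd by simp
  qed
  have mWc: "measure W Wc = Phi (- c)"
  proof -
    have "distr W std_normal_measure (\<lambda>w. w t) = std_normal_measure"
      unfolding W_def by (rule distr_PiM_component) (auto simp: std_prob)
    hence "Phi (-c) = measure (distr W std_normal_measure (\<lambda>w. w t)) {x. c \<le> x}"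
      by (simp add: std_sym)
    also have "\<dots> = measure W ((\<lambda>w. w t) -` {x. c \<le> x} \<inter> space W)"
    proof (rule measure_distr)
      show "(\<lambda>w. w t) \<in> measurable W std_normal_measure" unfolding W_def
        by (rule measurable_component_singleton) simp
      have "{x. c \<le> x} = {c..}" by auto
      thus "{x. c \<le> x} \<in> sets std_normal_measure" by simp
    qed
    also have "(\<lambda>w. w t) -` {x. c \<le> x} \<inter> space W = Wc" unfolding Wc_def by auto
    finally show ?thesis by simp
  qed
  define B where "B = (\<lambda>(a, n). {X \<in> space R. (\<Sum>k<n. X a k) \<le> real n * r a - real n * eps n})"
  have BS: "\<And>i. i \<in> Astar \<times> {1..<t} \<Longrightarrow> B i \<in> sets R"
  proof -
    fix i assume i: "i \<in> Astar \<times> {1..<t}"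
    obtain a n where ian: "i = (a, n)" by (cases i)
    have a: "a < N" using i ian AN by auto
    show "B i \<in> sets R" unfolding B_def ian
      by (simp, rule sets_le_real, intro borel_measurable_sum XR a)
  qed
  have Bm: "\<And>i. i \<in> Astar \<times> {1..<t} \<Longrightarrow> measure R (B i) \<le> 1 / real t ^ 4"
  proof -
    fix i assume i: "i \<in> Astar \<times> {1..<t}"
    obtain a n where ian: "i = (a, n)" by (cases i)
    have a: "a < N" and n1: "n \<ge> 1" using i ian AN by auto
    let ?Q = "PiM (UNIV::nat set) (\<lambda>_. p a)"
    have dQ: "distr R ?Q (\<lambda>X. X a) = ?Q" unfolding R_def
      by (rule distr_PiM_component) (auto intro!: prob_space_PiM pp simp: a)
    have mQ: "(\<lambda>X. X a) \<in> measurable R ?Q" unfolding R_def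
      by (rule measurable_component_singleton) (simp add: a)
    have C: "{x \<in> space ?Q. (\<Sum>k<n. x k) \<le> real n * r a - real n * eps n} \<in> sets ?Q"
    proof -
      have compQ: "(\<lambda>x. x k) \<in> borel_measurable ?Q" for k :: nat
      proof -
        have 1: "(\<lambda>x. x k) \<in> measurable ?Q (p a)" by (rule measurable_component_singleton) simp
        have eq: "measurable ?Q (p a) = measurable ?Q borel" by (rule measurable_cong_sets[OF refl sp[OF a]])
        show ?thesis using 1 unfolding eq .
      qed
      show ?thesis by (rule sets_le_real) (intro borel_measurable_sum compQ)
    qed
    have "measure R (B i) = measure R ((\<lambda>X. X a) -` {x \<in> space ?Q. (\<Sum>k<n. x k) \<le> real n * r a - real n * eps n} \<inter> space R)"
      unfolding B_def ian using mQ by (auto simp: measurable_def intro!: arg_cong[where f="measure R"])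
    also have "\<dots> = measure ?Q {x \<in> space ?Q. (\<Sum>k<n. x k) \<le> real n * r a - real n * eps n}"
      using measure_distr[OF mQ C] dQ by simp
    also have "\<dots> \<le> exp (- 2 * (real n * eps n)\<^sup>2 / real n)"
    proof -
      have d0: "0 \<le> real n * eps n" unfolding eps_def using L1 by simp
      show ?thesis using hoeff_arm[OF pp[OF a] sp[OF a] ae[OF a] n1 d0]
        unfolding r_def mean_rew_def by simp
    qed
    also have "\<dots> \<le> exp (- 4 * L)"
    proof -
      have e2: "(eps n)\<^sup>2 = 4 * L / (real n + 1)" unfolding eps_def using L1 by simp
      have "(real n * eps n)\<^sup>2 / real n = real n * (eps n)\<^sup>2"
        using n1 by (simp add: power2_eq_square)
      hence "(real n * eps n)\<^sup>2 / real n = real n * (4 * L / (real n + 1))" by (simp only: e2)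
      moreover have "real n * (4 * L / (real n + 1)) \<ge> 2 * L"
        using n1 L1 by (simp add: field_simps)
      ultimately show ?thesis by simp
    qed
    also have "exp (- 4 * L) = 1 / real t ^ 4"
    proof -
      have "exp (4 * L) = real t ^ 4" unfolding L_def using t4
        by (metis exp_ln exp_of_nat_mult of_nat_numeral of_nat_0_less_iff order.strict_trans zero_less_numeral)
      thus ?thesis by (simp add: exp_minus field_simps)
    qed
    finally show "measure R (B i) \<le> 1 / real t ^ 4" .
  qed
  have compl: "space R - G \<subseteq> (\<Union>i\<in>Astar \<times> {1..<t}. B i)"
  proof
    fix X assume X: "X \<in> space R - G"
    then obtain a n where a: "a \<in> Astar" and n: "n \<in> {1..<t}"
      and lt: "\<not> r a - (\<Sum>k<n. X a k) / real n \<le> eps n" unfolding G_def by auto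
    have "(\<Sum>k<n. X a k) \<le> real n * r a - real n * eps n"
      using lt n by (simp add: field_simps)
    hence "X \<in> B (a, n)" using X unfolding B_def by simp
    thus "X \<in> (\<Union>i\<in>Astar \<times> {1..<t}. B i)" using a n by blast
  qed
  have "measure R (space R - G) \<le> measure R (\<Union>i\<in>Astar \<times> {1..<t}. B i)"
    by (rule R.finite_measure_mono[OF compl]) (use BS in auto)
  also have "\<dots> \<le> (\<Sum>i\<in>Astar \<times> {1..<t}. measure R (B i))"
    by (rule measure_UNION_le) (use finA BS in auto)
  also have "\<dots> \<le> (\<Sum>i\<in>Astar \<times> {1..<t}. 1 / real t ^ 4)"
    by (rule sum_mono) (rule Bm)
  also have "\<dots> = real (card Astar) * real (t - 1) / real t ^ 4" by (simp add: card_cartesian_product)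
  also have "\<dots> \<le> 1 / 2"
  proof -
    have "real (card Astar) * real (t - 1) \<le> real m * real t"
      using cardA by (intro mult_mono) auto
    also have "\<dots> \<le> real t ^ 2 * real t" using mt by (intro mult_right_mono) auto
    also have "\<dots> \<le> real t ^ 4 / 2"
    proof -
      have "real t ^ 2 * real t * 2 \<le> real t ^ 2 * real t * real t" using t4
        by (intro mult_left_mono) auto
      thus ?thesis by (simp add: power_def field_simps) 
    qed
    finally show ?thesis using t4 by (simp add: field_simps)
  qed
  finally have "measure R (space R - G) \<le> 1 / 2" .
  hence mG: "measure R G \<ge> 1 / 2" using R.prob_compl[OF GS] by simp
  have "measure (cl_space N p) (Wc \<times> G) = measure W Wc * measure R G"
    unfolding MWR measure_def using R.emeasure_pair_measure_Times[OF WcS GS]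
    by (simp add: enn2real_mult)
  also have "\<dots> \<ge> Phi (-c) * (1/2)"
  proof -
    have "Phi (-c) * (1/2) \<le> Phi (-c) * measure R G"
      using mG Phi_pos[of "-c"] by (intro mult_left_mono) auto
    thus ?thesis using mWc by simp
  qed
  finally have "Phi (-c) / 2 \<le> measure (cl_space N p) (Wc \<times> G)" by simp
  also have "\<dots> \<le> measure (cl_space N p) E"
    by (rule WR.finite_measure_mono[unfolded MWR[symmetric], OF incl ES])
  finally have PE: "Phi (-c) / 2 \<le> measure (cl_space N p) E" .
  have pos: "Phi (-c) > 0" by (rule Phi_pos)
  have "measure (cl_space N p) E > 0" using PE pos by linarith
  moreover have "1 / measure (cl_space N p) E \<le> 2 / Phi (-c)"
    using PE pos by (simp add: field_simps)
  ultimately show ?thesis unfolding Let_def E_def[symmetric] c_def[symmetric] by simp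
qed

end
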